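(* Identify $\mathrm{SO}(2)$ with $\mathbb{C}_1=\{z\in\mathbb{C}:|z|=1\}$, let $n$ be even, let $G([n],E)$ be the complete graph, and let $\boldsymbol{z}^\star\in\mathbb{C}_1^n$ be the ground truth. Then there exist a choice of bad edges $E_b\subset E$ such that every node $j$ is incident to exactly one edge of $E_b$, a choice of corrupted measurements $z_{jk}\in\mathbb{C}_1$ for $jk\in E_b$ (with $z_{jk}=z_j^\star\overline{z_k^\star}$ for $jk\in E\setminus E_b$), and a point $\hat{\boldsymbol{z}}\in\mathbb{C}_1^n$ with $0<\delta(\hat{\boldsymbol{z}})<\pi$ that is a fixed point of GD-$L_1$-MRA, i.e. $\partial_vF_\angle^j(\hat z_j;\hat{\boldsymbol{z}})\ge 0$ for all $j\in[n]$ and $v\in\{\pm1\}$.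
   Context: $d_\angle(z_1,z_2)=|\arg(z_1\overline{z_2})|$ with $\arg\in(-\pi,\pi]$; $\delta(\boldsymbol{z})=\max_{jk\in E}d_\angle(\overline{z_j^\star}z_j,\overline{z_k^\star}z_k)$. Coordinate energy: $F_\angle^j(y;\boldsymbol{z})=\sum_{k\in[n]\setminus\{j\}}d_\angle(y,z_{jk}z_k)$; for $v\in\{\pm1\}$, $\partial_vF_\angle^j(y;\boldsymbol{z})=\lim_{h\to0^+}(F_\angle^j(e^{ivh}y;\boldsymbol{z})-F_\angle^j(y;\boldsymbol{z}))/h$. GD-$L_1$-MRA cyclically updates one coordinate $j$ at a time: if some $v\in\{\pm1\}$ has $\partial_vF_\angle^j(z_j;\boldsymbol{z})<0$, it moves $z_j$ along $s\mapsto e^{ivs}z_j$ to the first point of $\{\pm z_{jk}z_k\}$ at which $\partial_vF_\angle^j\ge0$; otherwise $z_j$ is left unchanged. Hence its fixed points are exactly the $\boldsymbol{z}$ with $\partial_vF_\angle^j(z_j;\boldsymbol{z})\ge0$ for all $j$ and $v\in\{\pm1\}$. *)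

theory Defs
  imports "HOL-Analysis.Analysis"
begin

definition d_ang :: "complex \<Rightarrow> complex \<Rightarrow> real" where
  "d_ang z1 z2 = \<bar>Arg (z1 * cnj z2)\<bar>"

definition complete_edges :: "nat \<Rightarrow> nat set set" where
  "complete_edges n = {{j, k} | j k. j < n \<and> k < n \<and> j \<noteq> k}"

definition delta :: "nat \<Rightarrow> (nat \<Rightarrow> complex) \<Rightarrow> (nat \<Rightarrow> complex) \<Rightarrow> real" where
  "delta n zs z = Max {d_ang (cnj (zs j) * z j) (cnj (zs k) * z k) | j k. j < n \<and> k < n \<and> j \<noteq> k}"

definition F_ang :: "nat \<Rightarrow> (nat \<Rightarrow> nat \<Rightarrow> complex) \<Rightarrow> nat \<Rightarrow> complex \<Rightarrow> (nat \<Rightarrow> complex) \<Rightarrow> real" where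
  "F_ang n Z j y z = (\<Sum>k\<in>{..<n} - {j}. d_ang y (Z j k * z k))"

definition has_dir_deriv :: "(complex \<Rightarrow> real) \<Rightarrow> complex \<Rightarrow> real \<Rightarrow> real \<Rightarrow> bool" where
  "has_dir_deriv f y v D \<longleftrightarrow>
     ((\<lambda>h. (f (exp (\<i> * complex_of_real (v * h)) * y) - f y) / h) \<longlongrightarrow> D) (at_right 0)"

end

theory Submission
  imports Defs
begin

lemma unit_cnj: "cmod z = 1 \<Longrightarrow> z * cnj z = 1 \<and> cnj z * z = 1"
  by (metis complex_norm_square mult.commute of_real_1 power_one)

definition ph :: "nat \<Rightarrow> real" where "ph k = (if even k then 0 else pi/2)"
definition pt :: "nat \<Rightarrow> nat" where "pt j = (if even j then Suc j else j - 1)"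
definition th :: "nat \<Rightarrow> nat \<Rightarrow> real" where
  "th j k = (if k = pt j then 0 else ph j - ph k)"
definition gg :: "nat \<Rightarrow> nat \<Rightarrow> real \<Rightarrow> real" where
  "gg j k v = (if th j k = 0 then 1 else v * sgn (th j k))"

lemma pt_pt[simp]: "pt (pt j) = j"
  unfolding pt_def by auto

lemma pt_neq: "pt j \<noteq> j"
  unfolding pt_def by (auto elim: oddE)

lemma pt_lt: "even n \<Longrightarrow> j < n \<Longrightarrow> pt j < n"
  unfolding pt_def by (auto elim!: evenE)

lemma th_cases: "th j k = 0 \<or> th j k = pi/2 \<or> th j k = - (pi/2)"
  unfolding th_def ph_def by auto

lemma term_lemma:
  assumes v: "v = 1 \<or> v = -1" and t: "t = 0 \<or> t = pi/2 \<or> t = - (pi/2)"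
    and h: "0 < h" "h < pi/2"
  shows "abs (v * h + t) - abs t = h * (if t = 0 then 1 else v * sgn t)"
  using v t h by auto

lemma dang_cis: "y * cnj c = cis t \<Longrightarrow> -pi < s + t \<Longrightarrow> s + t \<le> pi \<Longrightarrow>
   d_ang (exp (\<i> * complex_of_real s) * y) c = \<bar>s + t\<bar>"
  unfolding d_ang_def
  by (metis Arg_cis cis_conv_exp cis_mult greaterThanAtMost_iff mult.assoc)

lemma dang_cis0: "y * cnj c = cis t \<Longrightarrow> -pi < t \<Longrightarrow> t \<le> pi \<Longrightarrow>
   d_ang y c = \<bar>t\<bar>"
  using dang_cis[of y c t 0] by simp

lemma G_sum:
  fixes v :: real
  assumes j: "j < 2*m" and v: "v = 1 \<or> v = -1"
  defines "G \<equiv> (\<lambda>k. if even k = even j \<or> k = pt j then 1 else (if even j then -v else v))"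
  shows "1 \<le> (\<Sum>k\<in>{..<2*m}-{j}. G k)"
proof -
  have pairs: "(\<Sum>k<2*q. f k) = (\<Sum>i<q. f (2*i) + f (Suc (2*i)))" for q and f :: "nat \<Rightarrow> real"
    by (induction q) auto
  have Gj: "G j = 1" unfolding G_def by simp
  have "(\<Sum>k\<in>{..<2*m}-{j}. G k) = (\<Sum>k<2*m. G k) - 1"
    using j Gj by (simp add: sum_diff1)
  also have "(\<Sum>k<2*m. G k) = (\<Sum>i<m. G (2*i) + G (Suc (2*i)))" by (rule pairs)
  also have "\<dots> \<ge> G (2*(j div 2)) + G (Suc (2*(j div 2)))"
  proof (rule member_le_sum)
    show "j div 2 \<in> {..<m}" using j by auto
    show "finite {..<m}" by simp
    show "0 \<le> G (2 * x) + G (Suc (2 * x))" if "x \<in> {..<m} - {j div 2}" for x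
      using v that unfolding G_def pt_def by auto
  qed
  moreover have "G (2*(j div 2)) + G (Suc (2*(j div 2))) = 2"
    unfolding G_def pt_def by (cases "even j") (auto elim!: evenE oddE)
  ultimately show ?thesis by linarith
qed

theorem lemma6:
  fixes n :: nat and zs :: "nat \<Rightarrow> complex"
  assumes "even n" and "2 \<le> n"
    and "\<forall>j<n. cmod (zs j) = 1"
  shows "\<exists>Eb :: nat set set. \<exists>Z :: nat \<Rightarrow> nat \<Rightarrow> complex. \<exists>zh :: nat \<Rightarrow> complex.
           Eb \<subseteq> complete_edges n
         \<and> (\<forall>j<n. \<exists>!e. e \<in> Eb \<and> j \<in> e)
         \<and> (\<forall>j<n. \<forall>k<n. j \<noteq> k \<longrightarrow>
              (if {j, k} \<in> Eb then cmod (Z j k) = 1 \<and> Z k j = cnj (Z j k)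
               else Z j k = zs j * cnj (zs k)))
         \<and> (\<forall>j<n. cmod (zh j) = 1)
         \<and> 0 < delta n zs zh \<and> delta n zs zh < pi
         \<and> (\<forall>j<n. \<forall>v\<in>{1, -1::real}. \<exists>D. has_dir_deriv (\<lambda>y. F_ang n Z j y zh) (zh j) v D \<and> D \<ge> 0)"
proof -
  obtain m where n: "n = 2*m" using assms(1) by (auto elim: evenE)
  have n1: "1 < n" using assms(2) by simp
  define zh where "zh k = zs k * cis (ph k)" for k
  define Eb where "Eb = {{j, pt j} | j. j < n}"
  define Z where "Z j k = (if k = pt j then zh j * cnj (zh k) else zs j * cnj (zs k))" for j k
  have zh1: "\<forall>k<n. cmod (zh k) = 1" by (simp add: zh_def norm_mult assms(3))
  have ptn: "\<And>j. j < n \<Longrightarrow> pt j < n" using pt_lt assms(1) by blast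
  have Eb_iff: "{j,k} \<in> Eb \<longleftrightarrow> k = pt j" if "j<n" "k<n" for j k
  proof
    assume "{j,k} \<in> Eb"
    then obtain i where "{j,k} = {i, pt i}" unfolding Eb_def by auto
    then show "k = pt j" by (metis doubleton_eq_iff pt_pt)
  next
    assume "k = pt j" then show "{j,k} \<in> Eb" unfolding Eb_def using that by auto
  qed
  have c1: "Eb \<subseteq> complete_edges n"
    unfolding Eb_def complete_edges_def using ptn pt_neq by force
  have c2: "\<forall>j<n. \<exists>!e. e \<in> Eb \<and> j \<in> e"
  proof (intro allI impI)
    fix j assume j: "j < n"
    show "\<exists>!e. e \<in> Eb \<and> j \<in> e"
    proof (rule ex1I[of _ "{j, pt j}"])
      show "{j, pt j} \<in> Eb \<and> j \<in> {j, pt j}" unfolding Eb_def using j by auto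
      fix e assume "e \<in> Eb \<and> j \<in> e"
      then obtain i where "e = {i, pt i}" "j \<in> e" unfolding Eb_def by auto
      then show "e = {j, pt j}" by (metis insertE insert_commute pt_pt singletonD)
    qed
  qed
  have c3: "\<forall>j<n. \<forall>k<n. j \<noteq> k \<longrightarrow>
              (if {j, k} \<in> Eb then cmod (Z j k) = 1 \<and> Z k j = cnj (Z j k)
               else Z j k = zs j * cnj (zs k))"
  proof (intro allI impI)
    fix j k assume jk: "j < n" "k < n" "j \<noteq> k"
    show "if {j, k} \<in> Eb then cmod (Z j k) = 1 \<and> Z k j = cnj (Z j k)
               else Z j k = zs j * cnj (zs k)"
    proof (cases "k = pt j")
      case True
      then have "j = pt k" by simp
      then show ?thesis using True Eb_iff jk zh1 unfolding Z_def by (simp add: norm_mult)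
    next
      case False
      then show ?thesis using Eb_iff jk unfolding Z_def by simp
    qed
  qed
  have prodid: "zh j * cnj (Z j k * zh k) = cis (th j k)" if jk: "j < n" "k < n" for j k
  proof (cases "k = pt j")
    case True
    have "Z j k * zh k = zh j * (cnj (zh k) * zh k)" unfolding Z_def using True by simp
    also have "\<dots> = zh j" using unit_cnj zh1 jk by simp
    finally show ?thesis using True unit_cnj zh1 jk unfolding th_def by simp
  next
    case False
    have "Z j k * zh k = zs j * (cnj (zs k) * zs k) * cis (ph k)" unfolding Z_def zh_def using False
      by (simp add: mult.assoc)
    also have "\<dots> = zs j * cis (ph k)" using unit_cnj assms(3) jk by simp
    finally have e: "Z j k * zh k = zs j * cis (ph k)" .
    have "zh j * cnj (Z j k * zh k) = zs j * cis (ph j) * cnj (zs j * cis (ph k))"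
      unfolding e unfolding zh_def ..
    also have "\<dots> = (zs j * cnj (zs j)) * (cis (ph j) * cis (- ph k))"
      by (simp add: cis_cnj mult_ac)
    also have "\<dots> = cis (ph j - ph k)" using unit_cnj assms(3) jk by (simp add: cis_mult)
    finally show ?thesis using False unfolding th_def by simp
  qed
  have th_bd: "\<bar>th j k\<bar> \<le> pi/2" for j k using th_cases[of j k] pi_gt_zero by (auto simp: abs_if)
  have delta_eq: "delta n zs zh = pi/2"
  proof -
    let ?S = "{d_ang (cnj (zs j) * zh j) (cnj (zs k) * zh k) | j k. j < n \<and> k < n \<and> j \<noteq> k}"
    have cz: "cnj (zs j) * zh j = cis (ph j)" if "j < n" for j
      unfolding zh_def using unit_cnj assms(3) that by (simp add: mult.assoc[symmetric])
    have dd: "d_ang (cis a) (cis b) = \<bar>a - b\<bar>" if "-pi < a - b" "a - b \<le> pi" for a b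
      using dang_cis0[of "cis a" "cis b" "a - b"] that by (simp add: cis_cnj cis_mult)
    have php: "ph j - ph k \<in> {0, pi/2, -(pi/2)}" for j k unfolding ph_def by auto
    have val: "d_ang (cnj (zs j) * zh j) (cnj (zs k) * zh k) = \<bar>ph j - ph k\<bar>" if "j<n" "k<n" for j k
    proof -
      have "-pi < ph j - ph k" unfolding ph_def using pi_gt_zero by (auto; linarith)
      moreover have "ph j - ph k \<le> pi" unfolding ph_def using pi_gt_zero by (auto; linarith)
      ultimately
      show ?thesis using cz that dd by simp
    qed
    have sub: "?S \<subseteq> {0, pi/2}"
    proof
      fix x assume "x \<in> ?S"
      then obtain j k where "j<n" "k<n" "x = \<bar>ph j - ph k\<bar>" using val by blast
      then show "x \<in> {0, pi/2}" unfolding ph_def by auto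
    qed
    have mem: "pi/2 \<in> ?S"
    proof -
      have "d_ang (cnj (zs 0) * zh 0) (cnj (zs 1) * zh 1) = pi/2"
        using val[of 0 1] n1 unfolding ph_def by simp
      then show ?thesis using n1 by (smt (verit, best) mem_Collect_eq zero_less_one zero_neq_one order.strict_trans)
    qed
    have fin: "finite ?S" using sub finite_subset by blast
    show ?thesis unfolding delta_def
    proof (rule Max_eqI[OF fin])
      fix y assume "y \<in> ?S"
      then have "y \<in> {0, pi/2}" using sub by blast
      then show "y \<le> pi/2" using pi_gt_zero by auto
    qed (rule mem)
  qed
  have c5: "\<forall>j<n. \<forall>v\<in>{1, -1::real}. \<exists>D. has_dir_deriv (\<lambda>y. F_ang n Z j y zh) (zh j) v D \<and> D \<ge> 0"
  proof (intro allI impI ballI)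
    fix j v assume j: "j < n" and vv: "v \<in> {1, -1::real}"
    then have v: "v = 1 \<or> v = -1" by auto
    define D where "D = (\<Sum>k\<in>{..<n}-{j}. gg j k v)"
    have Dpos: "D \<ge> 0"
    proof -
      define G where "G = (\<lambda>k. if even k = even j \<or> k = pt j then 1 else (if even j then -v else v))"
      have "gg j k v = G k" if "k \<noteq> j" for k
        using v that pi_gt_zero unfolding gg_def th_def ph_def pt_def G_def by auto
      then have "D = (\<Sum>k\<in>{..<2*m}-{j}. G k)" unfolding D_def n by (intro sum.cong) auto
      also have "\<dots> \<ge> 1" unfolding G_def by (rule G_sum) (use j n v in auto)
      finally show ?thesis by simp
    qed
    have ev: "\<forall>\<^sub>F h in at_right 0.
      (F_ang n Z j (exp (\<i> * complex_of_real (v * h)) * zh j) zh - F_ang n Z j (zh j) zh) / h = D"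
      unfolding eventually_at_right_field
    proof (intro exI[of _ "pi/2"] conjI allI impI)
      show "(0::real) < pi/2" by simp
      fix h :: real assume h: "0 < h" "h < pi/2"
      have vh: "\<bar>v * h\<bar> < pi/2" using v h by auto
      have tm: "d_ang (exp (\<i> * complex_of_real (v * h)) * zh j) (Z j k * zh k)
             - d_ang (zh j) (Z j k * zh k) = h * gg j k v" if k: "k < n" for k
      proof -
        have tb: "-pi < th j k" "th j k \<le> pi" "-pi < v * h + th j k" "v * h + th j k \<le> pi"
          using th_bd[of j k] pi_gt_zero vh unfolding abs_le_iff abs_less_iff by linarith+
        have a: "d_ang (exp (\<i> * complex_of_real (v * h)) * zh j) (Z j k * zh k) = \<bar>v * h + th j k\<bar>"
          by (rule dang_cis[OF prodid[OF j k]]) (use tb in auto)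
        have b: "d_ang (zh j) (Z j k * zh k) = \<bar>th j k\<bar>"
          by (rule dang_cis0[OF prodid[OF j k]]) (use tb in auto)
        show ?thesis unfolding a b gg_def by (rule term_lemma[OF v th_cases h])
      qed
      have "F_ang n Z j (exp (\<i> * complex_of_real (v * h)) * zh j) zh - F_ang n Z j (zh j) zh
          = (\<Sum>k\<in>{..<n}-{j}. h * gg j k v)"
        unfolding F_ang_def sum_subtractf[symmetric] by (intro sum.cong) (use tm in auto)
      also have "\<dots> = h * D" unfolding D_def by (simp add: sum_distrib_left)
      finally show "(F_ang n Z j (exp (\<i> * complex_of_real (v * h)) * zh j) zh - F_ang n Z j (zh j) zh) / h = D"
        using h by simp
    qed
    show "\<exists>D. has_dir_deriv (\<lambda>y. F_ang n Z j y zh) (zh j) v D \<and> D \<ge> 0"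
      unfolding has_dir_deriv_def using tendsto_eventually[OF ev] Dpos by blast
  qed
  have dpos: "0 < delta n zs zh \<and> delta n zs zh < pi" unfolding delta_eq using pi_gt_zero by linarith
  show ?thesis
    apply (rule exI[of _ Eb], rule exI[of _ Z], rule exI[of _ zh])
    using c1 c2 c3 zh1 dpos c5 by blast
qed

end
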